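(* For every $n \geq 3$, the $n$-sun $S_n$ is in $B_2^m$.
   Context: For $n\ge 3$, the $n$-sun $S_n$ is the graph with vertex set $\{x_1,\dots,x_n,y_1,\dots,y_n\}$ and edge set consisting of all edges $\{x_i,x_j\}$ for $1\le i<j\le n$, the edges $\{x_i,y_i\},\{x_{i+1},y_i\}$ for $1\le i<n$, and the edges $\{x_1,y_n\},\{x_n,y_n\}$. An EPG representation of a graph is a set of paths on a rectangular grid (sequences of grid points joined consecutively by grid edges), one per vertex, such that two vertices are adjacent iff their paths share a grid edge. A bend is a point of a path where a horizontal and a vertical grid edge of the path meet. A path is monotonic if it is ascending in both columns and rows. $B_k^m$ is the class of graphs having an EPG representation in which every path is monotonic and has at most $k$ bends. *)

theory Defs
  imports Main
begin

text \<open>Grid points are pairs (column, row) of integers.  A grid edge is the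
  (unordered) set of its two endpoints.\<close>

type_synonym point = "int \<times> int"

definition grid_adj :: "point \<Rightarrow> point \<Rightarrow> bool" where
  "grid_adj p q \<longleftrightarrow> \<bar>fst p - fst q\<bar> + \<bar>snd p - snd q\<bar> = 1"

definition grid_path :: "point list \<Rightarrow> bool" where
  "grid_path ps \<longleftrightarrow> ps \<noteq> [] \<and> (\<forall>i. Suc i < length ps \<longrightarrow> grid_adj (ps ! i) (ps ! Suc i))"

definition path_edges :: "point list \<Rightarrow> point set set" where
  "path_edges ps = {{ps ! i, ps ! Suc i} | i. Suc i < length ps}"

definition monotonic_path :: "point list \<Rightarrow> bool" where
  "monotonic_path ps \<longleftrightarrow> grid_path ps \<and>
     (\<forall>i. Suc i < length ps \<longrightarrow> fst (ps ! i) \<le> fst (ps ! Suc i) \<and> snd (ps ! i) \<le> snd (ps ! Suc i))"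

text \<open>A bend is an interior point of the path where a horizontal and a vertical
  edge of the path meet.  An edge is horizontal iff its endpoints lie in the same row.\<close>

definition bends :: "point list \<Rightarrow> nat" where
  "bends ps = card {i. 0 < i \<and> Suc i < length ps \<and>
      ((snd (ps ! (i - 1)) = snd (ps ! i)) \<noteq> (snd (ps ! i) = snd (ps ! Suc i)))}"

definition in_Bm :: "nat \<Rightarrow> 'a set \<Rightarrow> 'a set set \<Rightarrow> bool" where
  "in_Bm k V Ed \<longleftrightarrow> (\<exists>P :: 'a \<Rightarrow> point list.
      (\<forall>v\<in>V. monotonic_path (P v) \<and> bends (P v) \<le> k) \<and>
      (\<forall>u\<in>V. \<forall>v\<in>V. u \<noteq> v \<longrightarrow>
          ({u, v} \<in> Ed \<longleftrightarrow> path_edges (P u) \<inter> path_edges (P v) \<noteq> {})))"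

datatype sun_vertex = X nat | Y nat

definition sun_vertices :: "nat \<Rightarrow> sun_vertex set" where
  "sun_vertices n = {X i | i. 1 \<le> i \<and> i \<le> n} \<union> {Y i | i. 1 \<le> i \<and> i \<le> n}"

definition sun_edges :: "nat \<Rightarrow> sun_vertex set set" where
  "sun_edges n =
     {{X i, X j} | i j. 1 \<le> i \<and> i < j \<and> j \<le> n}
   \<union> {{X i, Y i} | i. 1 \<le> i \<and> i < n}
   \<union> {{X (Suc i), Y i} | i. 1 \<le> i \<and> i < n}
   \<union> {{X 1, Y n}, {X n, Y n}}"

end

theory Submission
  imports Defs
begin

definition tp :: "int \<Rightarrow> int \<Rightarrow> nat \<Rightarrow> nat \<Rightarrow> nat \<Rightarrow> point" where
  "tp x0 y0 a b k = (if k \<le> a then (x0, y0 + int k) else if k \<le> a + b then (x0 + int (k - a), y0 + int a)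
      else (x0 + int b, y0 + int a + int (k - a - b)))"

definition tpath :: "int \<Rightarrow> int \<Rightarrow> nat \<Rightarrow> nat \<Rightarrow> nat \<Rightarrow> point list" where
  "tpath x0 y0 a b c = map (tp x0 y0 a b) [0..<a+b+c+1]"

definition VE :: "int \<Rightarrow> int \<Rightarrow> point set" where "VE x y = {(x,y),(x,y+1)}"
definition HE :: "int \<Rightarrow> int \<Rightarrow> point set" where "HE x y = {(x,y),(x+1,y)}"

lemma VE_eq[simp]: "VE x y = VE x' y' \<longleftrightarrow> x = x' \<and> y = y'"
  by (auto simp: VE_def doubleton_eq_iff)
lemma HE_eq[simp]: "HE x y = HE x' y' \<longleftrightarrow> x = x' \<and> y = y'"
  by (auto simp: HE_def doubleton_eq_iff)
lemma VH_neq[simp]: "VE x y \<noteq> HE x' y'" "HE x' y' \<noteq> VE x y"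
  by (auto simp: HE_def VE_def doubleton_eq_iff)

definition EE :: "int \<Rightarrow> int \<Rightarrow> nat \<Rightarrow> nat \<Rightarrow> nat \<Rightarrow> point set set" where
  "EE x0 y0 a b c = {VE x0 y | y. y0 \<le> y \<and> y < y0 + int a}
     \<union> {HE x (y0 + int a) | x. x0 \<le> x \<and> x < x0 + int b}
     \<union> {VE (x0 + int b) y | y. y0 + int a \<le> y \<and> y < y0 + int a + int c}"

lemma memV: "VE x y \<in> EE x0 y0 a b c \<longleftrightarrow>
   (x = x0 \<and> y0 \<le> y \<and> y < y0 + int a) \<or> (x = x0 + int b \<and> y0 + int a \<le> y \<and> y < y0 + int a + int c)"
  by (auto simp: EE_def)

lemma memH: "HE x y \<in> EE x0 y0 a b c \<longleftrightarrow> (y = y0 + int a \<and> x0 \<le> x \<and> x < x0 + int b)"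
  by (auto simp: EE_def)

lemma EE_int: "EE x0 y0 a b c \<inter> EE x1 y1 a1 b1 c1 \<noteq> {} \<longleftrightarrow>
   (\<exists>x y. (VE x y \<in> EE x0 y0 a b c \<and> VE x y \<in> EE x1 y1 a1 b1 c1) \<or>
          (HE x y \<in> EE x0 y0 a b c \<and> HE x y \<in> EE x1 y1 a1 b1 c1))"
proof
  assume "EE x0 y0 a b c \<inter> EE x1 y1 a1 b1 c1 \<noteq> {}"
  then obtain e where e: "e \<in> EE x0 y0 a b c" "e \<in> EE x1 y1 a1 b1 c1" by blast
  from e(1) have "\<exists>x y. e = VE x y \<or> e = HE x y" unfolding EE_def by blast
  then show "\<exists>x y. (VE x y \<in> EE x0 y0 a b c \<and> VE x y \<in> EE x1 y1 a1 b1 c1) \<or>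
          (HE x y \<in> EE x0 y0 a b c \<and> HE x y \<in> EE x1 y1 a1 b1 c1)" using e by blast
qed blast

lemma tp_step: "k < a + b + c \<Longrightarrow>
   (k < a \<and> tp x0 y0 a b k = (x0, y0 + int k) \<and> tp x0 y0 a b (Suc k) = (x0, y0 + int k + 1)) \<or>
   (a \<le> k \<and> k < a + b \<and> tp x0 y0 a b k = (x0 + int (k - a), y0 + int a) \<and> tp x0 y0 a b (Suc k) = (x0 + int (k - a) + 1, y0 + int a)) \<or>
   (a + b \<le> k \<and> tp x0 y0 a b k = (x0 + int b, y0 + int a + int (k - a - b)) \<and> tp x0 y0 a b (Suc k) = (x0 + int b, y0 + int a + int (k - a - b) + 1))"
  unfolding tp_def by auto

lemma tpath_mono: "monotonic_path (tpath x0 y0 a b c)"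
  unfolding monotonic_path_def grid_path_def tpath_def
proof (intro conjI allI impI)
  fix i assume "Suc i < length (map (tp x0 y0 a b) [0..<a + b + c + 1])"
  then have i: "i < a + b + c" by simp
  have n: "map (tp x0 y0 a b) [0..<a + b + c + 1] ! i = tp x0 y0 a b i"
     "map (tp x0 y0 a b) [0..<a + b + c + 1] ! Suc i = tp x0 y0 a b (Suc i)"
    using i by (simp_all add: nth_map del: upt_Suc)
  show "grid_adj (map (tp x0 y0 a b) [0..<a + b + c + 1] ! i) (map (tp x0 y0 a b) [0..<a + b + c + 1] ! Suc i)"
    unfolding n grid_adj_def using tp_step[OF i, of x0 y0] by auto
  show "fst (map (tp x0 y0 a b) [0..<a + b + c + 1] ! i) \<le> fst (map (tp x0 y0 a b) [0..<a + b + c + 1] ! Suc i)"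
    unfolding n using tp_step[OF i, of x0 y0] by auto
  show "snd (map (tp x0 y0 a b) [0..<a + b + c + 1] ! i) \<le> snd (map (tp x0 y0 a b) [0..<a + b + c + 1] ! Suc i)"
    unfolding n using tp_step[OF i, of x0 y0] by auto
qed simp

lemma tpath_bends: "bends (tpath x0 y0 a b c) \<le> 2"
proof -
  let ?S = "{i. 0 < i \<and> Suc i < length (tpath x0 y0 a b c) \<and>
      ((snd (tpath x0 y0 a b c ! (i - 1)) = snd (tpath x0 y0 a b c ! i)) \<noteq> (snd (tpath x0 y0 a b c ! i) = snd (tpath x0 y0 a b c ! Suc i)))}"
  have "?S \<subseteq> {a, a + b}"
  proof
    fix i assume "i \<in> ?S"
    then have i: "0 < i" "i < a + b + c"
      and ne: "(snd (tp x0 y0 a b (i - 1)) = snd (tp x0 y0 a b i)) \<noteq> (snd (tp x0 y0 a b i) = snd (tp x0 y0 a b (Suc i)))"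
      by (auto simp: tpath_def nth_map simp del: upt_Suc)
    show "i \<in> {a, a + b}"
    proof (rule ccontr)
      assume "i \<notin> {a, a + b}"
      then show False using ne i unfolding tp_def by (auto split: if_splits)
    qed
  qed
  then have "card ?S \<le> card {a, a + b}" by (intro card_mono) auto
  also have "\<dots> \<le> 2" by (simp add: card_insert_if)
  finally show ?thesis unfolding bends_def .
qed

lemma tpath_edges_alt: "path_edges (tpath x0 y0 a b c) = {{tp x0 y0 a b i, tp x0 y0 a b (Suc i)} | i. i < a + b + c}"
  unfolding path_edges_def tpath_def
proof (intro equalityI subsetI)
  fix e assume "e \<in> {{map (tp x0 y0 a b) [0..<a + b + c + 1] ! i, map (tp x0 y0 a b) [0..<a + b + c + 1] ! Suc i} |i.
             Suc i < length (map (tp x0 y0 a b) [0..<a + b + c + 1])}"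
  then obtain i where "Suc i < a + b + c + 1" "e = {map (tp x0 y0 a b) [0..<a + b + c + 1] ! i, map (tp x0 y0 a b) [0..<a + b + c + 1] ! Suc i}"
    by auto
  then show "e \<in> {{tp x0 y0 a b i, tp x0 y0 a b (Suc i)} |i. i < a + b + c}"
    by (auto simp: nth_map simp del: upt_Suc)
next
  fix e assume "e \<in> {{tp x0 y0 a b i, tp x0 y0 a b (Suc i)} |i. i < a + b + c}"
  then obtain i where i: "i < a + b + c" "e = {tp x0 y0 a b i, tp x0 y0 a b (Suc i)}" by auto
  then have "e = {map (tp x0 y0 a b) [0..<a + b + c + 1] ! i, map (tp x0 y0 a b) [0..<a + b + c + 1] ! Suc i}"
    "Suc i < length (map (tp x0 y0 a b) [0..<a + b + c + 1])"
    by (simp_all add: nth_map del: upt_Suc)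
  then show "e \<in> {{map (tp x0 y0 a b) [0..<a + b + c + 1] ! i, map (tp x0 y0 a b) [0..<a + b + c + 1] ! Suc i} |i.
             Suc i < length (map (tp x0 y0 a b) [0..<a + b + c + 1])}" by blast
qed

lemma tpath_edges: "path_edges (tpath x0 y0 a b c) = EE x0 y0 a b c"
proof
  show "path_edges (tpath x0 y0 a b c) \<subseteq> EE x0 y0 a b c"
  proof
    fix e assume "e \<in> path_edges (tpath x0 y0 a b c)"
    then obtain i where i: "i < a + b + c" and e: "e = {tp x0 y0 a b i, tp x0 y0 a b (Suc i)}"
      unfolding tpath_edges_alt by blast
    from tp_step[OF i, of x0 y0] show "e \<in> EE x0 y0 a b c"
    proof (elim disjE conjE)
      assume h: "i < a" "tp x0 y0 a b i = (x0, y0 + int i)" "tp x0 y0 a b (Suc i) = (x0, y0 + int i + 1)"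
      then have "e = VE x0 (y0 + int i)" using e by (simp add: VE_def)
      then show ?thesis using h by (simp add: memV)
    next
      assume h: "a \<le> i" "i < a + b" "tp x0 y0 a b i = (x0 + int (i - a), y0 + int a)"
        "tp x0 y0 a b (Suc i) = (x0 + int (i - a) + 1, y0 + int a)"
      then have "e = HE (x0 + int (i - a)) (y0 + int a)" using e by (simp add: HE_def)
      then show ?thesis using h by (simp add: memH)
    next
      assume h: "a + b \<le> i" "tp x0 y0 a b i = (x0 + int b, y0 + int a + int (i - a - b))"
        "tp x0 y0 a b (Suc i) = (x0 + int b, y0 + int a + int (i - a - b) + 1)"
      then have "e = VE (x0 + int b) (y0 + int a + int (i - a - b))" using e by (simp add: VE_def)
      then show ?thesis using h i by (simp add: memV)
    qed
  qed
next
  show "EE x0 y0 a b c \<subseteq> path_edges (tpath x0 y0 a b c)"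
  proof
    fix e assume "e \<in> EE x0 y0 a b c"
    then consider (v1) y where "e = VE x0 y" "y0 \<le> y" "y < y0 + int a"
      | (h) x where "e = HE x (y0 + int a)" "x0 \<le> x" "x < x0 + int b"
      | (v2) y where "e = VE (x0 + int b) y" "y0 + int a \<le> y" "y < y0 + int a + int c"
      unfolding EE_def by blast
    then show "e \<in> path_edges (tpath x0 y0 a b c)"
    proof cases
      case v1
      define i where "i = nat (y - y0)"
      have i: "i < a + b + c" "i < a" using v1 by (auto simp: i_def)
      have "e = {tp x0 y0 a b i, tp x0 y0 a b (Suc i)}"
        using tp_step[OF i(1), of x0 y0] i v1 by (auto simp: i_def VE_def)
      then show ?thesis unfolding tpath_edges_alt using i by blast
    next
      case h
      define i where "i = a + nat (x - x0)"
      have i: "i < a + b + c" "a \<le> i" "i < a + b" using h by (auto simp: i_def)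
      have "e = {tp x0 y0 a b i, tp x0 y0 a b (Suc i)}"
        using tp_step[OF i(1), of x0 y0] i h by (auto simp: i_def HE_def)
      then show ?thesis unfolding tpath_edges_alt using i by blast
    next
      case v2
      define i where "i = a + b + nat (y - y0 - int a)"
      have i: "i < a + b + c" "a + b \<le> i" using v2 by (auto simp: i_def)
      have "e = {tp x0 y0 a b i, tp x0 y0 a b (Suc i)}"
        using tp_step[OF i(1), of x0 y0] i v2 by (auto simp: i_def VE_def)
      then show ?thesis unfolding tpath_edges_alt using i by blast
    qed
  qed
qed

definition sig :: "nat \<Rightarrow> nat \<Rightarrow> nat" where "sig n i = (if i < n then i + 1 else 1)"

definition EdX :: "nat \<Rightarrow> point set set" where "EdX i = EE (- int i) (- int i - 1) (i + 1) (2 * i) 1"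
definition EdY :: "nat \<Rightarrow> nat \<Rightarrow> point set set" where "EdY n i = EE (- int i) (- int i - 1) 1 (i + sig n i) (i + 1)"

lemma XX: "1 \<le> i \<Longrightarrow> 1 \<le> j \<Longrightarrow> EdX i \<inter> EdX j \<noteq> {}"
  unfolding EdX_def EE_int memH by (rule exI[of _ 0], rule exI[of _ 0]) auto

lemma YY: "1 \<le> i \<Longrightarrow> 1 \<le> j \<Longrightarrow> i \<le> n \<Longrightarrow> j \<le> n \<Longrightarrow> i \<noteq> j \<Longrightarrow> EdY n i \<inter> EdY n j = {}"
proof -
  assume h: "1 \<le> i" "1 \<le> j" "i \<le> n" "j \<le> n" "i \<noteq> j"
  have "\<not> (EdY n i \<inter> EdY n j \<noteq> {})"
    unfolding EdY_def EE_int memH memV sig_def using h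
    by (cases "i < n"; cases "j < n") auto
  then show ?thesis by simp
qed

lemma XY: "1 \<le> i \<Longrightarrow> 1 \<le> j \<Longrightarrow> i \<le> n \<Longrightarrow> j \<le> n \<Longrightarrow> (EdX i \<inter> EdY n j \<noteq> {}) = (i = j \<or> i = sig n j)"
proof -
  assume h: "1 \<le> i" "1 \<le> j" "i \<le> n" "j \<le> n"
  show ?thesis
  proof
    assume "EdX i \<inter> EdY n j \<noteq> {}"
    then show "i = j \<or> i = sig n j"
      unfolding EdY_def EdX_def EE_int memH memV sig_def using h
      by (cases "j < n") auto
  next
    assume "i = j \<or> i = sig n j"
    then show "EdX i \<inter> EdY n j \<noteq> {}"
    proof
      assume "i = j"
      then have "VE (- int i) (- int i - 1) \<in> EdX i \<inter> EdY n j"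
        unfolding EdY_def EdX_def by (simp add: memV)
      then show ?thesis by blast
    next
      assume s: "i = sig n j"
      have "sig n j \<ge> 1" by (simp add: sig_def)
      then have "VE (int i) 0 \<in> EdX i \<inter> EdY n j"
        unfolding EdY_def EdX_def using s by (simp add: memV)
      then show ?thesis by blast
    qed
  qed
qed

lemma SXX: "{X i, X j} \<in> sun_edges n \<longleftrightarrow> (i \<noteq> j \<and> 1 \<le> i \<and> 1 \<le> j \<and> i \<le> n \<and> j \<le> n)"
proof
  assume "{X i, X j} \<in> sun_edges n"
  then show "i \<noteq> j \<and> 1 \<le> i \<and> 1 \<le> j \<and> i \<le> n \<and> j \<le> n"
    unfolding sun_edges_def by (auto simp: doubleton_eq_iff)
next
  assume h: "i \<noteq> j \<and> 1 \<le> i \<and> 1 \<le> j \<and> i \<le> n \<and> j \<le> n"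
  show "{X i, X j} \<in> sun_edges n"
  proof (cases "i < j")
    case True
    then show ?thesis using h unfolding sun_edges_def by blast
  next
    case False
    then have "j < i" using h by simp
    then have "{X j, X i} \<in> sun_edges n" using h unfolding sun_edges_def by blast
    then show ?thesis by (simp add: insert_commute)
  qed
qed

lemma SYY: "{Y i, Y j} \<notin> sun_edges n"
  unfolding sun_edges_def by (auto simp: doubleton_eq_iff)

lemma SXY: "1 \<le> i \<Longrightarrow> 1 \<le> j \<Longrightarrow> i \<le> n \<Longrightarrow> j \<le> n \<Longrightarrow> 
  {X i, Y j} \<in> sun_edges n \<longleftrightarrow> (i = j \<or> i = sig n j)"
  unfolding sun_edges_def sig_def by (auto simp: doubleton_eq_iff)

theorem theorem3p8:
  fixes n :: nat
  assumes "n \<ge> 3"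
  shows "in_Bm 2 (sun_vertices n) (sun_edges n)"
proof -
  define P where "P v = (case v of X i \<Rightarrow> tpath (- int i) (- int i - 1) (i + 1) (2 * i) 1
      | Y i \<Rightarrow> tpath (- int i) (- int i - 1) 1 (i + sig n i) (i + 1))" for v
  have PX: "path_edges (P (X i)) = EdX i" for i by (simp add: P_def EdX_def tpath_edges)
  have PY: "path_edges (P (Y i)) = EdY n i" for i by (simp add: P_def EdY_def tpath_edges)
  have VX: "X i \<in> sun_vertices n \<longleftrightarrow> 1 \<le> i \<and> i \<le> n" for i by (auto simp: sun_vertices_def)
  have VY: "Y i \<in> sun_vertices n \<longleftrightarrow> 1 \<le> i \<and> i \<le> n" for i by (auto simp: sun_vertices_def)
  have A: "\<forall>v\<in>sun_vertices n. monotonic_path (P v) \<and> bends (P v) \<le> 2"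
  proof
    fix v show "monotonic_path (P v) \<and> bends (P v) \<le> 2"
      by (cases v) (simp_all add: P_def tpath_mono tpath_bends)
  qed
  have B: "\<forall>u\<in>sun_vertices n. \<forall>v\<in>sun_vertices n. u \<noteq> v \<longrightarrow>
          ({u, v} \<in> sun_edges n \<longleftrightarrow> path_edges (P u) \<inter> path_edges (P v) \<noteq> {})"
  proof (intro ballI impI)
    fix u v assume u: "u \<in> sun_vertices n" and v: "v \<in> sun_vertices n" and uv: "u \<noteq> v"
    show "{u, v} \<in> sun_edges n \<longleftrightarrow> path_edges (P u) \<inter> path_edges (P v) \<noteq> {}"
    proof (cases u)
      case (X i) note ui = this
      show ?thesis
      proof (cases v)
        case (X j)
        then show ?thesis using ui u v uv XX[of i j] by (simp add: PX VX SXX)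
      next
        case (Y j)
        then show ?thesis using ui u v XY[of i j n] SXY[of i j n] by (simp add: PX PY VX VY)
      qed
    next
      case (Y i) note ui = this
      show ?thesis
      proof (cases v)
        case (X j)
        then show ?thesis using ui u v XY[of j i n] SXY[of j i n]
          by (simp add: PX PY VX VY insert_commute Int_commute)
      next
        case (Y j)
        then show ?thesis using ui u v uv YY[of i j n] SYY[of i j n] by (simp add: PY VY)
      qed
    qed
  qed
  show ?thesis unfolding in_Bm_def using A B by blast
qed

end
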